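(* Let $X$ be a nonnegative random variable and $\nu\ge1$. Suppose there exist constants $\Theta_1>0$ and $\Theta_2>0$ such that $\mathbb EX^p\le[p^{\nu p}+\Theta_2^{\nu p}]\Theta_1^{2p}$ for all integers $p\ge1$. Then for every $\vartheta>0$, $$\mathbb P(X>\vartheta)\le3\exp[\Theta_2/(2e)]\exp\Big[-\frac{\vartheta^{1/\nu}}{2e\Theta_1^{2/\nu}}\Big].$$ *)

theory Defs
  imports "HOL-Probability.Probability"
begin

end

theory Submission
  imports Defs
begin

theorem corollaryB2:
  fixes M :: "'a measure" and X :: "'a \<Rightarrow> real"
    and \<nu> T1 T2 t :: real
  assumes "prob_space M"
    and "X \<in> borel_measurable M"
    and "\<And>x. x \<in> space M \<Longrightarrow> X x \<ge> 0"
    and "\<nu> \<ge> 1"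
    and "T1 > 0" and "T2 > 0"
    and "\<And>p::nat. p \<ge> 1 \<Longrightarrow>
          (\<integral>\<^sup>+ x. ennreal (X x ^ p) \<partial>M)
            \<le> ennreal ((real p powr (\<nu> * real p) + T2 powr (\<nu> * real p)) * T1 ^ (2 * p))"
    and "t > 0"
  shows "measure M {x \<in> space M. X x > t}
           \<le> 3 * exp (T2 / (2 * exp 1))
               * exp (- (t powr (1 / \<nu>)) / (2 * exp 1 * T1 powr (2 / \<nu>)))"
proof -
  interpret P: prob_space M by fact
  let ?S = "{x \<in> space M. X x > t}"
  define e where "e = exp (1::real)"
  have e0: "e > 0" and e3: "e \<le> 3" using exp_le by (auto simp: e_def)
  define s where "s = t powr (1 / \<nu>) / T1 powr (2 / \<nu>)"
  have s0: "s > 0" using assms by (simp add: s_def)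
  have ex: "- (t powr (1 / \<nu>)) / (2 * exp 1 * T1 powr (2 / \<nu>)) = - s / (2 * e)"
    by (simp add: s_def e_def)
  have spow: "s powr \<nu> = t / T1 ^ 2"
  proof -
    have nz: "\<nu> \<noteq> 0" using assms(4) by simp
    have "s powr \<nu> = (t powr (1 / \<nu>)) powr \<nu> / (T1 powr (2 / \<nu>)) powr \<nu>"
      using assms by (simp add: s_def powr_divide)
    also have "\<dots> = t powr 1 / T1 powr 2" using nz by (simp add: powr_powr)
    also have "\<dots> = t / T1 ^ 2" using assms by (simp add: powr_numeral)
    finally show ?thesis .
  qed
  have rhs: "3 * exp (T2 / (2 * exp 1)) * exp (- (t powr (1 / \<nu>)) / (2 * exp 1 * T1 powr (2 / \<nu>)))
     = 3 * exp (T2 / (2 * e)) * exp (- s / (2 * e))" using ex by (simp add: e_def)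
  have "measure M ?S \<le> 3 * exp (T2 / (2 * e)) * exp (- s / (2 * e))"
  proof (cases "1 \<le> 3 * exp (T2 / (2 * e)) * exp (- s / (2 * e))")
    case True
    then show ?thesis using P.prob_le_1[of ?S] by linarith
  next
    case False
    have ebig: "exp (T2 / (2 * e)) \<ge> 1" using assms e0 by simp
    have bb: "exp (- s / (2 * e)) \<le> exp (T2 / (2 * e)) * exp (- s / (2 * e))"
      using ebig mult_right_mono[OF ebig, of "exp (- s / (2 * e))"] by simp
    have "exp (- s / (2 * e)) < 1/3" using False bb by linarith
    moreover have "exp (- s / (2 * e)) = inverse (exp (s / (2*e)))"
      by (simp add: exp_minus)
    ultimately have "inverse (exp (s / (2*e))) < inverse 3" by simp
    hence "exp (s / (2*e)) > 3"
      using inverse_less_iff_less[of "exp (s / (2*e))" 3] by simp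
    hence "exp (s / (2*e)) > exp 1" using e3 unfolding e_def by linarith
    hence s2e: "s / (2*e) > 1" by (simp only: exp_less_cancel_iff)
    have "exp ((T2 - s) / (2 * e)) < 1"
    proof -
      have "exp ((T2 - s) / (2 * e)) = exp (T2 / (2 * e)) * exp (- s / (2 * e))"
        by (simp add: diff_divide_distrib flip: exp_add)
      thus ?thesis using False by simp
    qed
    hence T2s: "T2 < s" using e0 by (simp add: divide_less_0_iff)
    define p where "p = nat \<lceil>s / (2*e)\<rceil>"
    have p1: "real p \<ge> s / (2*e)" unfolding p_def by linarith
    have c0: "0 \<le> \<lceil>s / (2*e)\<rceil>" using s2e by simp
    have rp: "real p = of_int \<lceil>s / (2*e)\<rceil>" using c0 unfolding p_def by simp
    have p2: "real p < s / (2*e) + 1" unfolding rp using ceiling_correct[of "s/(2*e)"] by linarith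
    have pge1: "p \<ge> 1" using p1 s2e by linarith
    have pse: "real p \<le> s / e" using p2 s2e e0 by (simp add: field_simps)
    have e1: "1 \<le> e" unfolding e_def by simp
    have "s / e \<le> s / 1" using divide_left_mono[OF e1, of s] s0 e0 by simp
    hence ps: "real p \<le> s" using pse by simp
    have ppos: "real p > 0" using pge1 by simp
    define B where "B = (real p powr (\<nu> * real p) + T2 powr (\<nu> * real p)) * T1 ^ (2 * p)"
    have Sm: "?S \<in> sets M" using assms(2) by measurable
    have "ennreal (t ^ p) * emeasure M ?S = (\<integral>\<^sup>+ x. ennreal (t ^ p) * indicator ?S x \<partial>M)"
      using Sm by (simp add: nn_integral_cmult_indicator)
    also have "\<dots> \<le> (\<integral>\<^sup>+ x. ennreal (X x ^ p) \<partial>M)"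
    proof (rule nn_integral_mono)
      fix x assume x: "x \<in> space M"
      show "ennreal (t ^ p) * indicator ?S x \<le> ennreal (X x ^ p)"
      proof (cases "X x > t")
        case True
        then have "t ^ p \<le> X x ^ p" using assms(8) by (simp add: power_mono)
        then show ?thesis using True x by (simp add: indicator_def ennreal_leI)
      qed (simp add: indicator_def)
    qed
    also have "\<dots> \<le> ennreal B" using assms(7)[OF pge1] by (simp add: B_def)
    finally have "ennreal (t ^ p * measure M ?S) \<le> ennreal B"
      using ennreal_mult[of "t ^ p" "measure M ?S"] assms(8)
      by (simp add: P.emeasure_eq_measure)
    moreover have "B \<ge> 0" using assms by (simp add: B_def)
    ultimately have mk: "t ^ p * measure M ?S \<le> B" by (simp add: ennreal_le_iff)
    have tp: "t ^ p = s powr (\<nu> * real p) * T1 ^ (2 * p)"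
    proof -
      have "s powr (\<nu> * real p) = (s powr \<nu>) ^ p"
        using s0 by (simp add: powr_powr[symmetric] powr_realpow)
      also have "\<dots> = t ^ p / T1 ^ (2 * p)" using spow by (simp add: power_divide power_mult)
      finally show ?thesis using assms by simp
    qed
    have tpos: "t ^ p > 0" using assms by simp
    have "measure M ?S \<le> B / t ^ p" using mk tpos by (simp add: field_simps)
    also have "B / t ^ p = (real p / s) powr (\<nu> * real p) + (T2 / s) powr (\<nu> * real p)"
      unfolding B_def tp using assms s0 by (simp add: powr_divide add_divide_distrib)
    also have "\<dots> \<le> exp (- s / (2 * e)) + exp (T2 / (2 * e)) * exp (- s / (2 * e))"
    proof (rule add_mono)
      have nup: "real p \<le> \<nu> * real p" using assms(4) ppos by simp
      have "(real p / s) powr (\<nu> * real p) \<le> (real p / s) powr (real p)"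
        using nup ps s0 ppos by (intro powr_mono') auto
      also have "\<dots> = exp (- (real p * ln (s / real p)))"
        using ppos s0 by (simp add: powr_def ln_div algebra_simps)
      also have "\<dots> \<le> exp (- s / (2 * e))"
      proof -
        have "exp 1 \<le> s / real p" using pse ppos e0 e_def by (simp add: field_simps)
        hence l1: "1 \<le> ln (s / real p)" using ppos s0 ln_le_cancel_iff[of "exp 1" "s / real p"]
          by simp
        have "real p * 1 \<le> real p * ln (s / real p)"
          using mult_left_mono[OF l1, of "real p"] ppos by simp
        hence "s / (2*e) \<le> real p * ln (s / real p)" using p1 by linarith
        thus ?thesis by simp
      qed
      finally show "(real p / s) powr (\<nu> * real p) \<le> exp (- s / (2 * e))" .
    next
      have "real p * 1 \<le> real p * \<nu>" using mult_left_mono[OF assms(4), of "real p"] ppos by simp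
      hence "s / (2*e) \<le> \<nu> * real p" using p1 by (simp add: mult.commute)
      hence "(T2 / s) powr (\<nu> * real p) \<le> (T2 / s) powr (s / (2*e))"
        using T2s s0 assms(6) by (intro powr_mono') auto
      also have "\<dots> = exp (s / (2*e) * ln (T2 / s))"
        using T2s s0 assms(6) by (simp add: powr_def mult.commute)
      also have "\<dots> \<le> exp (s / (2*e) * (T2 / s - 1))"
        using ln_le_minus_one[of "T2/s"] s0 e0 assms(6)
        by (intro exp_mono mult_left_mono) auto
      also have "\<dots> = exp (T2 / (2 * e)) * exp (- s / (2 * e))"
        using s0 e0 by (simp add: field_simps flip: exp_add)
      finally show "(T2 / s) powr (\<nu> * real p) \<le> exp (T2 / (2 * e)) * exp (- s / (2 * e))" .
    qed
    also have "\<dots> \<le> 3 * exp (T2 / (2 * e)) * exp (- s / (2 * e))"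
    proof -
      have "3 * exp (T2 / (2 * e)) * exp (- s / (2 * e)) = 3 * (exp (T2 / (2 * e)) * exp (- s / (2 * e)))"
        by (simp only: mult.assoc)
      moreover have "0 \<le> exp (T2 / (2 * e)) * exp (- s / (2 * e))" by simp
      ultimately show ?thesis using bb by linarith
    qed
    finally show ?thesis .
  qed
  then show ?thesis using rhs by simp
qed

end
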